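(* Let \[ f(x):=(x-r)\prod_{j=2}^n(x-x_j)=x^n+a_1x^{n-1}+a_2x^{n-2}+\cdots+a_n \] be a real polynomial, where $r>0$ and $x_2,\ldots,x_n$ are nonzero complex numbers such that $\mathrm{Re}(x_j)\le0$ for all $j\in\{2,\ldots,n\}$ and $\mathrm{Re}(x_j)<0$ for some $j\in\{2,\ldots,n\}$. Assume that $\prod_{j=2}^n(x-x_j)$ is not of the form $(x+\mu)\prod_{j=1}^m(x^2+\beta_j^2)$ with $\mu,\beta_1,\ldots,\beta_m>0$ (where $n-1=2m+1$). Then for each $k\in\{1,2,\ldots,n-2\}$, $a_k\le0$ implies $a_{k+2}<0$. *)

theory Defs
  imports Complex_Main "HOL-Computational_Algebra.Polynomial"
begin

end

theory Submission
  imports Defs "HOL-Computational_Algebra.Fundamental_Theorem_Algebra"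
begin

definition rc :: "real poly \<Rightarrow> complex poly" where "rc p = map_poly complex_of_real p"

lemma coeff_rc [simp]: "coeff (rc p) n = of_real (coeff p n)"
  unfolding rc_def by (simp add: coeff_map_poly)

lemma rc_pCons [simp]: "rc (pCons a p) = pCons (of_real a) (rc p)"
  unfolding rc_def by (simp add: map_poly_pCons)

lemma rc_0 [simp]: "rc 0 = 0" unfolding rc_def by simp

lemma rc_add: "rc (p + q) = rc p + rc q"
  by (intro poly_eqI) simp

lemma rc_smult: "rc (smult a p) = smult (of_real a) (rc p)"
  by (intro poly_eqI) simp

lemma rc_mult: "rc (p * q) = rc p * rc q"
  by (induction p) (simp_all add: rc_add rc_smult)

lemma rc_1 [simp]: "rc 1 = 1" unfolding rc_def by simp

lemma rc_prod: "rc (\<Prod>i\<in>A. f i) = (\<Prod>i\<in>A. rc (f i))"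
  by (induction A rule: infinite_finite_induct) (simp_all add: rc_mult)

lemma poly_rc_real: "poly (rc p) (of_real x) = of_real (poly p x)"
  by (induction p) simp_all

lemma rc_inj: "rc p = rc q \<Longrightarrow> p = q"
  by (intro poly_eqI) (metis coeff_rc of_real_eq_iff)

lemma degree_rc [simp]: "degree (rc p) = degree p"
  unfolding rc_def by (simp add: degree_map_poly)

lemma lead_rc [simp]: "lead_coeff (rc p) = of_real (lead_coeff p)"
  by simp

definition Dif :: "(int \<Rightarrow> real) \<Rightarrow> int \<Rightarrow> int \<Rightarrow> int \<Rightarrow> real" where
  "Dif B u d e = B (u+d) * B (u+e) - B u * B (u+d+e)"

definition G1 :: "(int \<Rightarrow> real) \<Rightarrow> int \<Rightarrow> int \<Rightarrow> int \<Rightarrow> real" where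
  "G1 B v d e = B (v+d) * B (v+e-1) + B (v+d-1) * B (v+e) - B v * B (v+d+e-1) - B (v-1) * B (v+d+e)"

definition G2 :: "(int \<Rightarrow> real) \<Rightarrow> int \<Rightarrow> int \<Rightarrow> int \<Rightarrow> real" where
  "G2 B v d e = B (v+d) * B (v+e-2) + B (v+d-2) * B (v+e) - B v * B (v+d+e-2) - B (v-2) * B (v+d+e)"

definition cv :: "real \<Rightarrow> real \<Rightarrow> real \<Rightarrow> (int \<Rightarrow> real) \<Rightarrow> int \<Rightarrow> real" where
  "cv w0 w1 w2 B j = w0 * B j + w1 * B (j-1) + w2 * B (j-2)"

definition invI :: "(int \<Rightarrow> real) \<Rightarrow> bool" where
  "invI B \<longleftrightarrow> (\<forall>u d e. d \<ge> 1 \<longrightarrow> e \<ge> 2 \<longrightarrow> even e \<longrightarrow> Dif B u d e \<ge> 0)"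

lemma expand:
  "Dif (cv w0 w1 w2 B) u d e = w0^2 * Dif B u d e + w1^2 * Dif B (u-1) d e + w2^2 * Dif B (u-2) d e
     + w0*w1 * G1 B u d e + w1*w2 * G1 B (u-1) d e + w0*w2 * G2 B u d e"
  unfolding Dif_def G1_def G2_def cv_def
  by (simp add: algebra_simps power2_eq_square)

lemma Iapp: "invI B \<Longrightarrow> d \<ge> 1 \<Longrightarrow> e \<ge> 2 \<Longrightarrow> even e \<Longrightarrow> B u * B (u+d+e) \<le> B (u+d) * B (u+e)"
  unfolding invI_def Dif_def by auto

lemma G1_nonneg:
  assumes "invI B" "d \<ge> 1" "e \<ge> 2" "even e"
  shows "G1 B v d e \<ge> 0"
proof -
  have a: "B (v-1) * B (v+d+e) \<le> B (v+d) * B (v+e-1)"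
    using Iapp[OF assms(1), of "d+1" e "v-1"] assms by (simp add: algebra_simps)
  have b: "B v * B (v+d+e-1) \<le> B (v+d-1) * B (v+e)"
  proof (cases "d = 1")
    case True then show ?thesis by (simp add: add.commute)
  next
    case False
    then have "Dif B v (d-1) e \<ge> 0" using assms unfolding invI_def by auto
    then show ?thesis unfolding Dif_def by (simp add: algebra_simps)
  qed
  show ?thesis using a b unfolding G1_def by linarith
qed

lemma G2_nonneg:
  assumes I: "invI B" and d: "d \<ge> 1" and e: "e \<ge> 2" "even e"
  shows "G2 B v d e \<ge> 0"
proof (cases "d = 1")
  case True
  have a: "B (v-2) * B (v+e+1) \<le> B (v-1) * B (v+e)"
    using Iapp[OF I, of 1 "e+2" "v-2"] e by (simp add: algebra_simps)
  have b: "B v * B (v+e-1) \<le> B (v+1) * B (v+e-2)"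
  proof (cases "e = 2")
    case True then show ?thesis by (simp add: algebra_simps)
  next
    case False
    then have "e - 2 \<ge> 2" "even (e-2)" using e by auto
    then show ?thesis using Iapp[OF I, of 1 "e-2" v] by (simp add: algebra_simps)
  qed
  have "G2 B v d e = B (v+1) * B (v+e-2) + B (v-1) * B (v+e) - B v * B (v+e-1) - B (v-2) * B (v+e+1)"
    unfolding G2_def True by (simp add: algebra_simps)
  then show ?thesis using a b by linarith
next
  case False
  have a: "B (v-2) * B (v+d+e) \<le> B (v+d) * B (v+e-2)"
    using Iapp[OF I, of "d+2" e "v-2"] e d by (simp add: algebra_simps)
  have b: "B v * B (v+d+e-2) \<le> B (v+d-2) * B (v+e)"
  proof (cases "d = 2")
    case True then show ?thesis by (simp add: algebra_simps)
  next
    case False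
    then have "d - 2 \<ge> 1" using d \<open>d \<noteq> 1\<close> by auto
    then show ?thesis using Iapp[OF I, of "d-2" e v] e by (simp add: algebra_simps)
  qed
  show ?thesis using a b unfolding G2_def by linarith
qed

lemma invI_cv:
  assumes "invI B" "w0 \<ge> 0" "w1 \<ge> 0" "w2 \<ge> 0"
  shows "invI (cv w0 w1 w2 B)"
  unfolding invI_def
proof (intro allI impI)
  fix u d e :: int assume h: "d \<ge> 1" "e \<ge> 2" "even e"
  have D: "Dif B u' d e \<ge> 0" for u' using assms(1) h unfolding invI_def by auto
  have g1: "G1 B u' d e \<ge> 0" for u' using G1_nonneg[OF assms(1) h] .
  have g2: "G2 B u' d e \<ge> 0" for u' using G2_nonneg[OF assms(1) h] .
  have "w0^2 * Dif B u d e \<ge> 0" "w1^2 * Dif B (u-1) d e \<ge> 0" "w2^2 * Dif B (u-2) d e \<ge> 0"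
    using D by auto
  moreover have "w0*w1 * G1 B u d e \<ge> 0" "w1*w2 * G1 B (u-1) d e \<ge> 0" "w0*w2 * G2 B u d e \<ge> 0"
    using g1 g2 assms(2-4) by auto
  ultimately show "Dif (cv w0 w1 w2 B) u d e \<ge> 0" unfolding expand by linarith
qed

definition invJ :: "(int \<Rightarrow> real) \<Rightarrow> bool" where
  "invJ B \<longleftrightarrow> (\<forall>j. B j > 0 \<longrightarrow> Dif B (j-2) 2 2 > 0)"

lemma invJ_cv:
  assumes I: "invI B" and J: "invJ B" and N: "\<forall>j. B j \<ge> 0"
    and w: "w0 \<ge> 0" "w1 \<ge> 0" "w2 \<ge> 0"
  shows "invJ (cv w0 w1 w2 B)"
  unfolding invJ_def
proof (intro allI impI)
  fix j assume pos: "cv w0 w1 w2 B j > 0"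
  have h: "(2::int) \<ge> 1" "(2::int) \<ge> 2" "even (2::int)" by auto
  have D: "Dif B u' 2 2 \<ge> 0" for u' using I h unfolding invI_def by auto
  have g1: "G1 B u' 2 2 \<ge> 0" for u' using G1_nonneg[OF I h] .
  have g2: "G2 B u' 2 2 \<ge> 0" for u' using G2_nonneg[OF I h] .
  have E: "Dif (cv w0 w1 w2 B) (j-2) 2 2 \<ge> w0^2 * Dif B (j-2) 2 2 + w1^2 * Dif B (j-2-1) 2 2 + w2^2 * Dif B (j-2-2) 2 2"
  proof -
    have "w0*w1 * G1 B (j-2) 2 2 \<ge> 0" "w1*w2 * G1 B (j-2-1) 2 2 \<ge> 0" "w0*w2 * G2 B (j-2) 2 2 \<ge> 0"
      using g1 g2 w by auto
    then show ?thesis unfolding expand by linarith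
  qed
  have nn: "w0^2 * Dif B (j-2) 2 2 \<ge> 0" "w1^2 * Dif B (j-2-1) 2 2 \<ge> 0" "w2^2 * Dif B (j-2-2) 2 2 \<ge> 0"
    using D by auto
  have N3: "B j \<ge> 0" "B (j-1) \<ge> 0" "B (j-2) \<ge> 0" using N by blast+
  have "(w0 > 0 \<and> B j > 0) \<or> (w1 > 0 \<and> B (j-1) > 0) \<or> (w2 > 0 \<and> B (j-2) > 0)"
  proof (rule ccontr)
    assume A: "\<not> ?thesis"
    have "w0 = 0 \<or> B j = 0" "w1 = 0 \<or> B (j-1) = 0" "w2 = 0 \<or> B (j-2) = 0"
      using A w N3 by linarith+
    then have "w0 * B j = 0" "w1 * B (j-1) = 0" "w2 * B (j-2) = 0" by auto
    then show False using pos unfolding cv_def by linarith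
  qed
  then have "w0^2 * Dif B (j-2) 2 2 > 0 \<or> w1^2 * Dif B (j-2-1) 2 2 > 0 \<or> w2^2 * Dif B (j-2-2) 2 2 > 0"
  proof (elim disjE conjE)
    assume a: "w0 > 0" "B j > 0"
    then have "Dif B (j-2) 2 2 > 0" using J unfolding invJ_def by blast
    then show ?thesis using a by simp
  next
    assume a: "w1 > 0" "B (j-1) > 0"
    then have "Dif B (j-1-2) 2 2 > 0" using J unfolding invJ_def by blast
    moreover have "j-1-2 = j-2-(1::int)" by simp
    ultimately show ?thesis using a by simp
  next
    assume a: "w2 > 0" "B (j-2) > 0"
    then have "Dif B (j-2-2) 2 2 > 0" using J unfolding invJ_def by blast
    then show ?thesis using a by simp
  qed
  then show "Dif (cv w0 w1 w2 B) (j-2) 2 2 > 0"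
  proof (elim disjE)
    assume "w0^2 * Dif B (j-2) 2 2 > 0" then show ?thesis using E nn by linarith
  next
    assume "w1^2 * Dif B (j-2-1) 2 2 > 0" then show ?thesis using E nn by linarith
  next
    assume "w2^2 * Dif B (j-2-2) 2 2 > 0" then show ?thesis using E nn by linarith
  qed
qed


definition cf :: "real poly \<Rightarrow> int \<Rightarrow> real" where
  "cf p j = (if j < 0 then 0 else coeff p (nat j))"

lemma quad_mult_eq: "[:w0, w1, w2:] * h = smult w0 h + pCons 0 (smult w1 h + pCons 0 (smult w2 h))"
  by (simp add: algebra_simps)

lemma cf_quad: "cf ([:w0, w1, w2:] * h) = cv w0 w1 w2 (cf h)"
proof
  fix j :: int
  show "cf ([:w0, w1, w2:] * h) j = cv w0 w1 w2 (cf h) j"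
  proof (cases "j < 0")
    case True then show ?thesis by (simp add: cf_def cv_def)
  next
    case False
    then obtain n where n: "j = int n" by (metis nonneg_int_cases not_less)
    show ?thesis
    proof (cases n)
      case 0 then show ?thesis unfolding quad_mult_eq n by (simp add: cf_def cv_def)
    next
      case (Suc m)
      show ?thesis
      proof (cases m)
        case 0 then show ?thesis unfolding quad_mult_eq n Suc by (simp add: cf_def cv_def)
      next
        case (Suc k)
        have a: "int n - 1 = int (Suc k)" "int n - 2 = int k" using \<open>n = Suc m\<close> Suc by auto
        show ?thesis unfolding quad_mult_eq n cv_def a using \<open>n = Suc m\<close> Suc
          by (simp add: cf_def nat_add_distrib)
      qed
    qed
  qed
qed

lemma cf_lin: "cf ([:a, 1:] * h) = cv a 1 0 (cf h)"
  using cf_quad[of a 1 0 h] by simp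

definition NC :: "(int \<Rightarrow> real) \<Rightarrow> bool" where
  "NC B \<longleftrightarrow> (\<forall>j \<ge> 0. B j = 0 \<longrightarrow> B (j+1) = 0 \<longrightarrow> (\<forall>k \<ge> j. B k = 0))"

lemma cv_nonneg: "\<forall>j. B j \<ge> 0 \<Longrightarrow> w0 \<ge> 0 \<Longrightarrow> w1 \<ge> 0 \<Longrightarrow> w2 \<ge> 0 \<Longrightarrow> \<forall>j. cv w0 w1 w2 B j \<ge> 0"
  unfolding cv_def by (simp add: add_nonneg_nonneg mult_nonneg_nonneg)

lemma cv_NC:
  assumes N: "\<forall>j. B j \<ge> 0" and NC: "NC B" and w: "w0 > 0" "w1 \<ge> 0" "w2 \<ge> 0"
  shows "NC (cv w0 w1 w2 B)"
  unfolding NC_def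
proof (intro allI impI)
  fix j k :: int
  assume j: "j \<ge> 0" and c0: "cv w0 w1 w2 B j = 0" and c1: "cv w0 w1 w2 B (j+1) = 0" and k: "k \<ge> j"
  have nn: "w0 * B i \<ge> 0" "w1 * B i \<ge> 0" "w2 * B i \<ge> 0" for i using N w by auto
  have z0: "w0 * B j = 0" "w1 * B (j-1) = 0" "w2 * B (j-2) = 0"
    using c0 nn[of j] nn[of "j-1"] nn[of "j-2"] unfolding cv_def by linarith+
  have c1': "w0 * B (j+1) + w1 * B j + w2 * B (j-1) = 0" using c1 unfolding cv_def by simp
  have z1: "w0 * B (j+1) = 0" "w1 * B j = 0" "w2 * B (j-1) = 0"
    using c1' nn[of "j+1"] nn[of "j"] nn[of "j-1"] by linarith+
  have "B j = 0" "B (j+1) = 0" using z0 z1 w by auto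
  then have all: "\<forall>i \<ge> j. B i = 0" using NC j unfolding NC_def by blast
  show "cv w0 w1 w2 B k = 0"
  proof (cases "k = j \<or> k = j + 1")
    case True then show ?thesis using c0 c1 by auto
  next
    case False
    then have "k \<ge> j + 2" using k by auto
    then show ?thesis using all unfolding cv_def by simp
  qed
qed

lemma cf_nonneg_neg: "j < 0 \<Longrightarrow> cf p j = 0" by (simp add: cf_def)

definition stab :: "real poly \<Rightarrow> bool" where
  "stab p \<longleftrightarrow> (\<forall>z. poly (rc p) z = 0 \<longrightarrow> Re z \<le> 0 \<and> z \<noteq> 0)"

lemma stab_nz: "stab p \<Longrightarrow> p \<noteq> 0"
  unfolding stab_def by (metis one_complex.simps(1) poly_0 rc_0 zero_less_one not_le)

lemma rc_quad: "rc [:a, b, c:] = [:of_real a, of_real b, of_real c:]" by simp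

lemma extract_factor:
  fixes p :: "real poly"
  assumes z: "poly (rc p) z = 0"
  shows "\<exists>h. (Im z = 0 \<and> p = [:- Re z, 1:] * h) \<or>
             (Im z \<noteq> 0 \<and> p = [:(Re z)^2 + (Im z)^2, -2 * Re z, 1:] * h)"
proof (cases "Im z = 0")
  case True
  then have "z = of_real (Re z)" by (simp add: complex_eq_iff)
  then have "of_real (poly p (Re z)) = (0::complex)" using z poly_rc_real[of p "Re z"] by simp
  then have "poly p (Re z) = 0" by simp
  then obtain h where "p = [:- Re z, 1:] * h" using poly_eq_0_iff_dvd by (metis dvdE)
  then show ?thesis using True by blast
next
  case False
  define Q where "Q = [:(Re z)^2 + (Im z)^2, -2 * Re z, 1:]"
  have Q0: "Q \<noteq> 0" unfolding Q_def by simp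
  have dQ: "degree Q = 2" unfolding Q_def by simp
  have pQz: "poly (rc Q) z = 0"
    unfolding Q_def rc_quad by (simp add: complex_eq_iff power2_eq_square algebra_simps)
  define R where "R = p mod Q"
  have pe: "p = Q * (p div Q) + R" unfolding R_def by simp
  have dR: "degree R < 2"
    using degree_mod_less[OF Q0, of p] dQ unfolding R_def by auto
  have Rform: "R = [:coeff R 0, coeff R 1:]"
  proof (intro poly_eqI)
    fix n show "coeff R n = coeff [:coeff R 0, coeff R 1:] n"
      using dR coeff_eq_0[of R n] by (cases n; cases "n - 1") (auto simp: coeff_pCons)
  qed
  have "poly (rc p) z = poly (rc Q) z * poly (rc (p div Q)) z + poly (rc R) z"
    by (subst pe) (simp add: rc_add rc_mult)
  then have "poly (rc R) z = 0" using z pQz by simp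
  then have "of_real (coeff R 0) + of_real (coeff R 1) * z = 0"
    by (subst (asm) Rform) (simp add: mult.commute)
  then have "coeff R 0 + coeff R 1 * Re z = 0" "coeff R 1 * Im z = 0"
    by (simp_all add: complex_eq_iff)
  then have "coeff R 1 = 0" "coeff R 0 = 0" using False by auto
  then have "R = 0" using Rform by simp
  then have "p = Q * (p div Q)" using pe by simp
  then show ?thesis using False unfolding Q_def by blast
qed


lemma factor_props:
  assumes pe: "p = F * h" and lF: "lead_coeff F = 1" and dF: "degree F \<ge> 1" and p0: "p \<noteq> 0"
  shows "h \<noteq> 0" "lead_coeff h = lead_coeff p" "degree h < degree p"
    "\<And>z. poly (rc h) z = 0 \<Longrightarrow> poly (rc p) z = 0"
proof -
  show h0: "h \<noteq> 0" using pe p0 by auto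
  have F0: "F \<noteq> 0" using lF by auto
  show "lead_coeff h = lead_coeff p" using pe lF by (simp add: lead_coeff_mult)
  show "degree h < degree p" using pe degree_mult_eq[OF F0 h0] dF by simp
  show "poly (rc p) z = 0" if "poly (rc h) z = 0" for z
    using that pe by (simp add: rc_mult)
qed

lemma stab_sub: "stab p \<Longrightarrow> (\<And>z. poly (rc h) z = 0 \<Longrightarrow> poly (rc p) z = 0) \<Longrightarrow> stab h"
  unfolding stab_def by blast

lemma decomp_at:
  assumes st: "stab p" and z: "poly (rc p) z = 0"
  shows "\<exists>h. stab h \<and> lead_coeff h = lead_coeff p \<and> degree h < degree p \<and>
     ((Im z = 0 \<and> Re z < 0 \<and> p = [:- Re z, 1:] * h) \<or>
      (Im z \<noteq> 0 \<and> p = [:(Re z)^2 + (Im z)^2, -2 * Re z, 1:] * h))"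
proof -
  have p0: "p \<noteq> 0" using stab_nz[OF st] .
  have zz: "Re z \<le> 0" "z \<noteq> 0" using st z unfolding stab_def by auto
  obtain h where h: "(Im z = 0 \<and> p = [:- Re z, 1:] * h) \<or>
             (Im z \<noteq> 0 \<and> p = [:(Re z)^2 + (Im z)^2, -2 * Re z, 1:] * h)"
    using extract_factor[OF z] by blast
  then show ?thesis
  proof (elim disjE conjE)
    assume a: "Im z = 0" "p = [:- Re z, 1:] * h"
    have "Re z \<noteq> 0" using a zz by (simp add: complex_eq_iff)
    then have "Re z < 0" using zz by simp
    moreover note fp = factor_props[OF a(2) _ _ p0]
    ultimately show ?thesis using a stab_sub[OF st] by auto
  next
    assume a: "Im z \<noteq> 0" "p = [:(Re z)^2 + (Im z)^2, -2 * Re z, 1:] * h"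
    note fp = factor_props[OF a(2) _ _ p0]
    show ?thesis using a fp stab_sub[OF st] by auto
  qed
qed

lemma root_exists: "degree p > 0 \<Longrightarrow> \<exists>z. poly (rc p) z = 0"
  using fundamental_theorem_of_algebra[of "rc p"] constant_degree[of "rc p"] by simp

lemma deg0_monic: "degree p = 0 \<Longrightarrow> lead_coeff p = 1 \<Longrightarrow> p = 1"
  by (metis coeff_pCons_0 degree_0_id one_pCons)

lemma cf_1: "cf 1 j = (if j = 0 then 1 else 0)"
  by (auto simp: cf_def nat_eq_iff)

lemma base_inv: "invI (cf 1) \<and> invJ (cf 1) \<and> (\<forall>j. cf 1 j \<ge> 0) \<and> NC (cf 1) \<and> cf 1 0 > 0"
proof (intro conjI)
  show "invI (cf 1)" unfolding invI_def Dif_def cf_1 by auto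
  show "invJ (cf 1)" unfolding invJ_def Dif_def cf_1 by auto
  show "\<forall>j. cf 1 j \<ge> 0" unfolding cf_1 by auto
  show "NC (cf 1)" unfolding NC_def cf_1 by auto
  show "cf 1 0 > 0" unfolding cf_1 by auto
qed

lemma inv_step:
  assumes "invI B \<and> invJ B \<and> (\<forall>j. B j \<ge> 0) \<and> NC B \<and> B 0 > 0"
    and w: "w0 > 0" "w1 \<ge> 0" "w2 \<ge> 0"
  shows "invI (cv w0 w1 w2 B) \<and> invJ (cv w0 w1 w2 B) \<and> (\<forall>j. cv w0 w1 w2 B j \<ge> 0)
       \<and> NC (cv w0 w1 w2 B) \<and> cv w0 w1 w2 B 0 > 0"
proof (intro conjI)
  show "invI (cv w0 w1 w2 B)" using invI_cv assms by auto
  show "invJ (cv w0 w1 w2 B)" using invJ_cv assms by auto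
  show "\<forall>j. cv w0 w1 w2 B j \<ge> 0" using cv_nonneg assms by auto
  show "NC (cv w0 w1 w2 B)" using cv_NC assms by auto
  have "B (-1) = 0 \<or> True" by simp
  have "w1 * B (-1) \<ge> 0" "w2 * B (-2) \<ge> 0" using assms by auto
  moreover have "w0 * B 0 > 0" using assms by auto
  ultimately show "cv w0 w1 w2 B 0 > 0" unfolding cv_def by simp
qed

lemma stab_inv:
  "stab p \<Longrightarrow> lead_coeff p = 1 \<Longrightarrow>
    invI (cf p) \<and> invJ (cf p) \<and> (\<forall>j. cf p j \<ge> 0) \<and> NC (cf p) \<and> cf p 0 > 0"
proof (induction "degree p" arbitrary: p rule: less_induct)
  case less
  show ?case
  proof (cases "degree p = 0")
    case True
    then have "p = 1" using deg0_monic less.prems by blast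
    then show ?thesis using base_inv by simp
  next
    case False
    then obtain z where z: "poly (rc p) z = 0" using root_exists by blast
    have zz: "Re z \<le> 0" using less.prems z unfolding stab_def by auto
    obtain h where h: "stab h" "lead_coeff h = lead_coeff p" "degree h < degree p"
      and alt: "(Im z = 0 \<and> Re z < 0 \<and> p = [:- Re z, 1:] * h) \<or>
      (Im z \<noteq> 0 \<and> p = [:(Re z)^2 + (Im z)^2, -2 * Re z, 1:] * h)"
      using decomp_at[OF less.prems(1) z] by blast
    have IH: "invI (cf h) \<and> invJ (cf h) \<and> (\<forall>j. cf h j \<ge> 0) \<and> NC (cf h) \<and> cf h 0 > 0"
      using less.hyps[OF h(3) h(1)] h(2) less.prems(2) by simp
    from alt show ?thesis
    proof (elim disjE conjE)
      assume a: "Im z = 0" "Re z < 0" "p = [:- Re z, 1:] * h"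
      show ?thesis unfolding a(3) cf_lin using inv_step[OF IH, of "- Re z" 1 0] a by simp
    next
      assume a: "Im z \<noteq> 0" "p = [:(Re z)^2 + (Im z)^2, -2 * Re z, 1:] * h"
      have "(Re z)^2 + (Im z)^2 > 0" using a(1) by (simp add: add_nonneg_pos)
      then show ?thesis unfolding a(2) cf_quad using inv_step[OF IH, of _ "-2 * Re z" 1] zz by simp
    qed
  qed
qed


lemma cf_top: "lead_coeff h = 1 \<Longrightarrow> cf h (int (degree h)) = 1"
  by (simp add: cf_def)

lemma pos_coeffs:
  assumes st: "stab p" and lp: "lead_coeff p = 1" and z: "poly (rc p) z = 0" and rz: "Re z < 0"
    and j: "0 \<le> j" "j \<le> int (degree p)"
  shows "cf p j > 0"
proof -
  obtain h where h: "stab h" "lead_coeff h = lead_coeff p" "degree h < degree p"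
      and alt: "(Im z = 0 \<and> Re z < 0 \<and> p = [:- Re z, 1:] * h) \<or>
      (Im z \<noteq> 0 \<and> p = [:(Re z)^2 + (Im z)^2, -2 * Re z, 1:] * h)"
    using decomp_at[OF st z] by blast
  define B where "B = cf h"
  have IH: "invI B \<and> invJ B \<and> (\<forall>j. B j \<ge> 0) \<and> NC B \<and> B 0 > 0"
    unfolding B_def using stab_inv[OF h(1)] h(2) lp by simp
  have N: "B i \<ge> 0" for i using IH by blast
  have top: "B (int (degree h)) = 1" unfolding B_def using cf_top h(2) lp by simp
  have nc: "\<And>i k. i \<ge> 0 \<Longrightarrow> B i = 0 \<Longrightarrow> B (i+1) = 0 \<Longrightarrow> k \<ge> i \<Longrightarrow> B k = 0"
    using IH unfolding NC_def by blast
  from alt show ?thesis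
  proof (elim disjE conjE)
    assume a: "Im z = 0" "Re z < 0" "p = [:- Re z, 1:] * h"
    have "degree p = degree [:- Re z, 1:] + degree h"
      unfolding a(3) by (rule degree_mult_eq) (simp_all add: stab_nz h(1))
    then have dp: "degree p = degree h + 1" by simp
    have c: "cf p j = (- Re z) * B j + B (j - 1)"
      unfolding a(3) cf_lin B_def cv_def by simp
    show ?thesis
    proof (rule ccontr)
      assume "\<not> ?thesis"
      then have "(- Re z) * B j + B (j - 1) \<le> 0" using c by simp
      moreover have "(- Re z) * B j \<ge> 0" using mult_nonneg_nonneg[of "- Re z" "B j"] N[of j] a(2) by linarith
      ultimately have "(- Re z) * B j = 0" "B (j-1) = 0" using N[of "j-1"] by linarith+
      then have b: "B j = 0" "B (j-1) = 0" using a(2) by auto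
      show False
      proof (cases "j = 0")
        case True then show False using b IH by simp
      next
        case False
        then have "B (int (degree h)) = 0" using nc[of "j-1" "int (degree h)"] b j dp by simp
        then show False using top by simp
      qed
    qed
  next
    assume a: "Im z \<noteq> 0" "p = [:(Re z)^2 + (Im z)^2, -2 * Re z, 1:] * h"
    have q: "(Re z)^2 + (Im z)^2 > 0" using a(1) by (simp add: add_nonneg_pos)
    have "degree p = degree [:(Re z)^2 + (Im z)^2, -2 * Re z, 1:] + degree h"
      unfolding a(2) by (rule degree_mult_eq) (simp_all add: stab_nz h(1))
    then have dp: "degree p = degree h + 2" by simp
    have c: "cf p j = ((Re z)^2 + (Im z)^2) * B j + (-2 * Re z) * B (j - 1) + B (j - 2)"
      unfolding a(2) cf_quad B_def cv_def by simp
    show ?thesis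
    proof (rule ccontr)
      assume "\<not> ?thesis"
      then have "((Re z)^2 + (Im z)^2) * B j + (-2 * Re z) * B (j - 1) + B (j - 2) \<le> 0" using c by simp
      moreover have "((Re z)^2 + (Im z)^2) * B j \<ge> 0" "(-2 * Re z) * B (j - 1) \<ge> 0"
        using mult_nonneg_nonneg[of "(Re z)^2 + (Im z)^2" "B j"] mult_nonneg_nonneg[of "-2 * Re z" "B (j-1)"]
          N[of j] N[of "j-1"] q rz by linarith+
      ultimately have "((Re z)^2 + (Im z)^2) * B j = 0" "(-2 * Re z) * B (j - 1) = 0" "B (j-2) = 0"
        using N[of "j-2"] by linarith+
      then have b: "B j = 0" "B (j-1) = 0" "B (j-2) = 0" using q rz by auto
      show False
      proof (cases "j = 0 \<or> j = 1")
        case True then show False using b IH by auto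
      next
        case False
        then have "B (int (degree h)) = 0" using nc[of "j-2" "int (degree h)"] b j dp by simp
        then show False using top by simp
      qed
    qed
  qed
qed

lemma imag_prod:
  "stab p \<Longrightarrow> lead_coeff p = 1 \<Longrightarrow> (\<forall>z. poly (rc p) z = 0 \<longrightarrow> Re z = 0) \<Longrightarrow>
    \<exists>(m::nat) \<beta>. (\<forall>i\<in>{1..m}. \<beta> i > (0::real)) \<and> p = (\<Prod>i\<in>{1..m}. [:(\<beta> i)^2, 0, 1:])"
proof (induction "degree p" arbitrary: p rule: less_induct)
  case less
  show ?case
  proof (cases "degree p = 0")
    case True
    then have "p = 1" using deg0_monic less.prems by blast
    show ?thesis
      apply (rule exI[where x = "0::nat"])
      apply (rule exI[where x = "\<lambda>_::nat. 1::real"])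
      using \<open>p = 1\<close> by simp
  next
    case False
    then obtain z where z: "poly (rc p) z = 0" using root_exists by blast
    have zz: "Re z = 0" using less.prems z by auto
    obtain h where h: "stab h" "lead_coeff h = lead_coeff p" "degree h < degree p"
      and alt: "(Im z = 0 \<and> Re z < 0 \<and> p = [:- Re z, 1:] * h) \<or>
      (Im z \<noteq> 0 \<and> p = [:(Re z)^2 + (Im z)^2, -2 * Re z, 1:] * h)"
      using decomp_at[OF less.prems(1) z] by blast
    have a: "Im z \<noteq> 0" "p = [:(Im z)^2, 0, 1:] * h" using alt zz by auto
    have hroots: "\<forall>z. poly (rc h) z = 0 \<longrightarrow> Re z = 0"
    proof (intro allI impI)
      fix z' assume "poly (rc h) z' = 0"
      then have "poly (rc p) z' = 0" unfolding a(2) rc_mult by (simp only: poly_mult mult_zero_right)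
      then show "Re z' = 0" using less.prems(3) by blast
    qed
    have lh: "lead_coeff h = 1" using h(2) less.prems(2) by simp
    have ex: "\<exists>(m::nat) \<beta>. (\<forall>i\<in>{1..m}. \<beta> i > (0::real)) \<and> h = (\<Prod>i\<in>{1..m}. [:(\<beta> i)^2, 0, 1:])"
      by (rule less.hyps[OF h(3) h(1) lh hroots])
    then obtain m :: nat and \<beta> where mb: "\<forall>i\<in>{1..m}. \<beta> i > (0::real)" "h = (\<Prod>i\<in>{1..m}. [:(\<beta> i)^2, 0, 1:])"
      by blast
    define \<beta>' where "\<beta>' = \<beta>(Suc m := \<bar>Im z\<bar>)"
    have "(\<Prod>i\<in>{1..Suc m}. [:(\<beta>' i)^2, 0, 1:]) = [:(\<beta>' (Suc m))^2, 0, 1:] * (\<Prod>i\<in>{1..m}. [:(\<beta>' i)^2, 0, 1:])"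
      by (rule prod.nat_ivl_Suc') simp
    also have "(\<Prod>i\<in>{1..m}. [:(\<beta>' i)^2, 0, 1:]) = h"
      unfolding mb(2) by (rule prod.cong) (auto simp: \<beta>'_def)
    also have "[:(\<beta>' (Suc m))^2, 0, 1:] = [:(Im z)^2, 0, 1:]" by (simp add: \<beta>'_def)
    finally have "p = (\<Prod>i\<in>{1..Suc m}. [:(\<beta>' i)^2, 0, 1:])" using a(2) by simp
    moreover have "\<forall>i\<in>{1..Suc m}. \<beta>' i > 0" using mb(1) a(1) by (auto simp: \<beta>'_def)
    ultimately show ?thesis by blast
  qed
qed

lemma G1_12: "G1 B v 1 2 = Dif B (v-1) 2 2"
  unfolding G1_def Dif_def by (simp add: algebra_simps)

lemma final_strict:
  assumes st: "stab G" and lG: "lead_coeff G = 1" and z: "poly (rc G) z = 0" and rz: "Re z < 0"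
    and nsp: "\<not> (\<exists>a (m::nat) \<beta>. a > 0 \<and> (\<forall>i\<in>{1..m}. \<beta> i > (0::real)) \<and>
                 G = [:a, 1:] * (\<Prod>i\<in>{1..m}. [:(\<beta> i)^2, 0, 1:]))"
    and u: "0 \<le> u" "u + 3 \<le> int (degree G)"
  shows "Dif (cf G) u 1 2 > 0"
proof -
  obtain h where h: "stab h" "lead_coeff h = lead_coeff G" "degree h < degree G"
      and alt: "(Im z = 0 \<and> Re z < 0 \<and> G = [:- Re z, 1:] * h) \<or>
      (Im z \<noteq> 0 \<and> G = [:(Re z)^2 + (Im z)^2, -2 * Re z, 1:] * h)"
    using decomp_at[OF st z] by blast
  define B where "B = cf h"
  have IH: "invI B \<and> invJ B \<and> (\<forall>j. B j \<ge> 0) \<and> NC B \<and> B 0 > 0"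
    unfolding B_def using stab_inv[OF h(1)] h(2) lG by simp
  have I: "invI B" and J: "invJ B" using IH by blast+
  have D12: "Dif B v 1 2 \<ge> 0" for v using I unfolding invI_def by auto
  have G1n: "G1 B v 1 2 \<ge> 0" for v by (rule G1_nonneg[OF I]) auto
  have G2n: "G2 B v 1 2 \<ge> 0" for v by (rule G2_nonneg[OF I]) auto
  have Jd: "B j > 0 \<Longrightarrow> Dif B (j-2) 2 2 > 0" for j using J unfolding invJ_def by blast
  have top: "B (int (degree h)) = 1" unfolding B_def using cf_top h(2) lG by simp
  have nc: "\<And>i k. i \<ge> 0 \<Longrightarrow> B i = 0 \<Longrightarrow> B (i+1) = 0 \<Longrightarrow> k \<ge> i \<Longrightarrow> B k = 0"
    using IH unfolding NC_def by blast
  have N: "B i \<ge> 0" for i using IH by blast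
  from alt show ?thesis
  proof (elim disjE conjE)
    assume a: "Im z = 0" "Re z < 0" "G = [:- Re z, 1:] * h"
    have "degree G = degree [:- Re z, 1:] + degree h"
      unfolding a(3) by (rule degree_mult_eq) (simp_all add: stab_nz h(1))
    then have dp: "degree G = degree h + 1" by simp
    have "B (u+1) > 0"
    proof (cases "\<exists>z'. poly (rc h) z' = 0 \<and> Re z' < 0")
      case True
      then obtain z' where "poly (rc h) z' = 0" "Re z' < 0" by blast
      then show ?thesis unfolding B_def
        using pos_coeffs[OF h(1) _ \<open>poly (rc h) z' = 0\<close> \<open>Re z' < 0\<close>, of "u+1"] h(2) lG u dp by simp
    next
      case False
      then have "\<forall>z'. poly (rc h) z' = 0 \<longrightarrow> Re z' = 0"
        using h(1) unfolding stab_def by force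
      then obtain m :: nat and \<beta> where "\<forall>i\<in>{1..m}. \<beta> i > (0::real)" "h = (\<Prod>i\<in>{1..m}. [:(\<beta> i)^2, 0, 1:])"
        using imag_prod[OF h(1)] h(2) lG by auto
      then show ?thesis using nsp a(2,3) by (metis neg_0_less_iff_less)
    qed
    then have pos: "Dif B (u-1) 2 2 > 0" using Jd[of "u+1"] by simp
    have "Dif (cf G) u 1 2 = (- Re z)^2 * Dif B u 1 2 + 1^2 * Dif B (u-1) 1 2 + 0^2 * Dif B (u-2) 1 2
       + (- Re z) * 1 * G1 B u 1 2 + 1 * 0 * G1 B (u-1) 1 2 + (- Re z) * 0 * G2 B u 1 2"
      unfolding a(3) cf_lin B_def[symmetric] expand ..
    also have "\<dots> = (- Re z)^2 * Dif B u 1 2 + Dif B (u-1) 1 2 + (- Re z) * Dif B (u-1) 2 2"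
      by (simp add: G1_12)
    finally show ?thesis using D12[of u] D12[of "u-1"] pos a(2)
      by (smt (verit) mult_pos_pos zero_le_power2 mult_nonneg_nonneg)
  next
    assume a: "Im z \<noteq> 0" "G = [:(Re z)^2 + (Im z)^2, -2 * Re z, 1:] * h"
    define q where "q = (Re z)^2 + (Im z)^2"
    define pp where "pp = -2 * Re z"
    have q: "q > 0" using a(1) unfolding q_def by (simp add: add_nonneg_pos)
    have pp: "pp > 0" using rz unfolding pp_def by simp
    have "degree G = degree [:(Re z)^2 + (Im z)^2, -2 * Re z, 1:] + degree h"
      unfolding a(2) by (rule degree_mult_eq) (simp_all add: stab_nz h(1))
    then have dp: "degree G = degree h + 2" by simp
    have "B u > 0 \<or> B (u+1) > 0"
    proof (rule ccontr)
      assume "\<not> ?thesis"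
      then have "B u = 0" "B (u+1) = 0" using N[of u] N[of "u+1"] by linarith+
      then have "B (int (degree h)) = 0" using nc[of u "int (degree h)"] u dp by simp
      then show False using top by simp
    qed
    then have pos: "Dif B (u-1) 2 2 > 0 \<or> Dif B (u-2) 2 2 > 0"
      using Jd[of "u+1"] Jd[of u] by auto
    have "Dif (cf G) u 1 2 = q^2 * Dif B u 1 2 + pp^2 * Dif B (u-1) 1 2 + 1^2 * Dif B (u-2) 1 2
       + q * pp * G1 B u 1 2 + pp * 1 * G1 B (u-1) 1 2 + q * 1 * G2 B u 1 2"
      unfolding a(2) cf_quad B_def[symmetric] expand q_def pp_def ..
    also have "\<dots> = q^2 * Dif B u 1 2 + pp^2 * Dif B (u-1) 1 2 + Dif B (u-2) 1 2
       + q * pp * Dif B (u-1) 2 2 + pp * Dif B (u-2) 2 2 + q * G2 B u 1 2"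
      by (simp add: G1_12 algebra_simps)
    finally have E: "Dif (cf G) u 1 2 = q^2 * Dif B u 1 2 + pp^2 * Dif B (u-1) 1 2 + Dif B (u-2) 1 2
       + q * pp * Dif B (u-1) 2 2 + pp * Dif B (u-2) 2 2 + q * G2 B u 1 2" .
    have n1: "q^2 * Dif B u 1 2 \<ge> 0" "pp^2 * Dif B (u-1) 1 2 \<ge> 0" "Dif B (u-2) 1 2 \<ge> 0"
      "q * G2 B u 1 2 \<ge> 0" using D12 G2n q by auto
    have d22: "Dif B v 2 2 \<ge> 0" for v using I unfolding invI_def by auto
    have n2: "q * pp * Dif B (u-1) 2 2 \<ge> 0" "pp * Dif B (u-2) 2 2 \<ge> 0" using d22 q pp by auto
    have "q * pp * Dif B (u-1) 2 2 > 0 \<or> pp * Dif B (u-2) 2 2 > 0" using pos q pp by auto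
    then show ?thesis using E n1 n2 by linarith
  qed
qed


lemma cf_int: "cf p (int i) = coeff p i" by (simp add: cf_def)

lemma poly_lin_c: "poly [:- c, 1:] z = z - (c::complex)" by simp

theorem theorem4p5:
  fixes n :: nat and r :: real and x :: "nat \<Rightarrow> complex" and f :: "real poly"
  assumes r_pos: "r > 0"
    and x_nz: "\<forall>j\<in>{2..n}. x j \<noteq> 0"
    and x_re_le: "\<forall>j\<in>{2..n}. Re (x j) \<le> 0"
    and x_re_lt: "\<exists>j\<in>{2..n}. Re (x j) < 0"
    and f_def: "map_poly complex_of_real f
                  = [:- complex_of_real r, 1:] * (\<Prod>j\<in>{2..n}. [:- x j, 1:])"
    and not_special: "\<not> (\<exists>(\<mu>::real) (m::nat) (\<beta>::nat \<Rightarrow> real).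
                  \<mu> > 0 \<and> (\<forall>i\<in>{1..m}. \<beta> i > 0) \<and> n - 1 = 2 * m + 1 \<and>
                  (\<Prod>j\<in>{2..n}. [:- x j, 1:])
                    = [:complex_of_real \<mu>, 1:] *
                      (\<Prod>i\<in>{1..m}. [:complex_of_real ((\<beta> i)\<^sup>2), 0, 1:]))"
    and k: "k \<in> {1..n-2}"
    and ak: "coeff f (n - k) \<le> 0"
  shows "coeff f (n - (k + 2)) < 0"
proof -
  define gC where "gC = (\<Prod>j\<in>{2..n}. [:- x j, 1:])"
  have n3: "n \<ge> 3" "1 \<le> k" "k \<le> n - 2" using k by auto
  have fC: "rc f = [:- complex_of_real r, 1:] * gC" using f_def unfolding rc_def gC_def .
  have "poly (rc f) (of_real r) = 0" unfolding fC by simp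
  then have "poly f r = 0" unfolding poly_rc_real by simp
  then obtain G where fG: "f = [:- r, 1:] * G" using poly_eq_0_iff_dvd by (metis dvdE)
  have "[:- complex_of_real r, 1:] * rc G = [:- complex_of_real r, 1:] * gC"
    using fC unfolding fG rc_mult by simp
  then have GC: "rc G = gC" by (subst (asm) mult_left_cancel) auto
  have roots: "poly gC z = 0 \<longleftrightarrow> (\<exists>j\<in>{2..n}. z = x j)" for z
    unfolding gC_def poly_prod by (simp add: poly_lin_c)
  have st: "stab G" unfolding stab_def GC roots using x_nz x_re_le by auto
  have "lead_coeff gC = 1" unfolding gC_def lead_coeff_prod by simp
  then have lG: "lead_coeff G = 1" using lead_rc[of G] unfolding GC by simp
  have "degree gC = (\<Sum>j\<in>{2..n}. degree [:- x j, 1:])" unfolding gC_def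
    by (rule degree_prod_eq_sum_degree) simp
  then have dG: "degree G = n - 1" using degree_rc[of G] unfolding GC by simp
  obtain j0 where j0: "j0 \<in> {2..n}" "Re (x j0) < 0" using x_re_lt by blast
  have z0: "poly (rc G) (x j0) = 0" unfolding GC roots using j0 by blast
  have nsp: "\<not> (\<exists>a (m::nat) \<beta>. a > 0 \<and> (\<forall>i\<in>{1..m}. \<beta> i > (0::real)) \<and>
                 G = [:a, 1:] * (\<Prod>i\<in>{1..m}. [:(\<beta> i)^2, 0, 1:]))"
  proof
    assume "\<exists>a (m::nat) \<beta>. a > 0 \<and> (\<forall>i\<in>{1..m}. \<beta> i > (0::real)) \<and>
                 G = [:a, 1:] * (\<Prod>i\<in>{1..m}. [:(\<beta> i)^2, 0, 1:])"
    then obtain a and m :: nat and \<beta> where ab: "a > 0" "\<forall>i\<in>{1..m}. \<beta> i > (0::real)"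
      "G = [:a, 1:] * (\<Prod>i\<in>{1..m}. [:(\<beta> i)^2, 0, 1:])" by blast
    have dP: "degree (\<Prod>i\<in>{1..m}. [:(\<beta> i)^2, 0, 1:]) = (\<Sum>i\<in>{1..m}. degree [:(\<beta> i)^2, 0, 1:])"
      by (rule degree_prod_eq_sum_degree) simp
    have P0: "(\<Prod>i\<in>{1..m}. [:(\<beta> i)^2, 0, 1:]) \<noteq> 0" by (simp add: prod_zero_iff)
    have "degree G = degree [:a, 1:] + degree (\<Prod>i\<in>{1..m}. [:(\<beta> i)^2, 0, 1:])"
      unfolding ab(3) by (rule degree_mult_eq) (simp_all add: P0)
    then have "n - 1 = 2 * m + 1" using dP dG by simp
    moreover have "gC = [:complex_of_real a, 1:] * (\<Prod>i\<in>{1..m}. [:complex_of_real ((\<beta> i)\<^sup>2), 0, 1:])"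
      unfolding GC[symmetric] ab(3) rc_mult rc_prod by simp
    ultimately show False using not_special ab(1,2) unfolding gC_def by blast
  qed
  have cfG: "coeff f i = - r * coeff G i + (if i = 0 then 0 else coeff G (i - 1))" for i
    unfolding fG by (simp add: coeff_pCons split: nat.split)
  have inv: "invI (cf G) \<and> invJ (cf G) \<and> (\<forall>j. cf G j \<ge> 0) \<and> NC (cf G) \<and> cf G 0 > 0"
    using stab_inv[OF st lG] .
  have pos: "i \<le> n - 1 \<Longrightarrow> coeff G i > 0" for i
    using pos_coeffs[OF st lG z0 j0(2), of "int i"] dG by (simp add: cf_int)
  show ?thesis
  proof (cases "k = n - 2")
    case True
    then have "n - (k + 2) = 0" by simp
    then show ?thesis using cfG[of 0] pos[of 0] r_pos by simp
  next
    case False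
    define t where "t = n - k - 3"
    have t1: "n - k = t + 3" "n - (k + 2) = t + 1" using False n3 unfolding t_def by auto
    have tn: "t + 3 \<le> n - 1" using n3 False unfolding t_def by auto
    have D: "Dif (cf G) (int t) 1 2 > 0"
      using final_strict[OF st lG z0 j0(2) nsp, of "int t"] tn dG by simp
    then have D': "coeff G (t+1) * coeff G (t+2) > coeff G t * coeff G (t+3)"
      unfolding Dif_def using cf_int[of G "t+1"] cf_int[of G "t+2"] cf_int[of G "t+3"] cf_int[of G t]
      by (simp add: add.commute)
    have a3: "coeff G (t+2) \<le> r * coeff G (t+3)" using ak cfG[of "t+3"] unfolding t1 by simp
    have p1: "coeff G (t+1) > 0" "coeff G (t+3) > 0" using pos tn by auto
    have "coeff G (t+1) * coeff G (t+2) \<le> coeff G (t+1) * (r * coeff G (t+3))"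
      using a3 p1 by (simp add: mult_left_mono)
    then have "coeff G t * coeff G (t+3) < (r * coeff G (t+1)) * coeff G (t+3)" using D' by (simp add: algebra_simps)
    then have "coeff G t < r * coeff G (t+1)" using p1(2) by (simp add: mult_less_cancel_right)
    then show ?thesis using cfG[of "t+1"] unfolding t1 by simp
  qed
qed

end
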